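(* Let $\mathfrak l$ be any Lagrangian subalgebra of $\mathfrak d$, regarded as a point of $\mathrm{Gr}(n,\mathfrak d)$. Then the Schouten bracket of $\Pi$ with itself vanishes at $\mathfrak l$: $[\Pi,\Pi](\mathfrak l)=0$.
   Context: Let $(\mathfrak u,\mathfrak u^* )$ be a finite-dimensional real Lie bialgebra, $n=\dim\mathfrak u$, and let $\mathfrak d=\mathfrak u\bowtie\mathfrak u^*$ be its double: the vector space $\mathfrak u\oplus\mathfrak u^*$ with the symmetric nondegenerate form $\langle x+\xi,y+\eta\rangle=(x,\eta)+(y,\xi)$ ($x,y\in\mathfrak u$, $\xi,\eta\in\mathfrak u^*$, $(\cdot,\cdot)$ the natural pairing), equipped with the unique Lie bracket for which $\langle\,,\rangle$ is ad-invariant and $\mathfrak u$, $\mathfrak u^*$ are subalgebras. A Lagrangian subalgebra of $\mathfrak d$ is a Lie subalgebra $\mathfrak l$ with $\dim\mathfrak l=n$ and $\langle a,b\rangle=0$ for all $a,b\in\mathfrak l$. $\mathrm{Gr}(n,\mathfrak d)$ is the Grassmannian of $n$-dimensional subspaces of $\mathfrak d$. Let $D$ be the adjoint group of $\mathfrak d$, acting on $\mathrm{Gr}(n,\mathfrak d)$, and let $\kappa:\mathfrak d\to\chi^1(\mathrm{Gr}(n,\mathfrak d))$ be the induced Lie algebra anti-homomorphism into vector fields, extended multilinearly to $\kappa:\wedge^k\mathfrak d\to\chi^k(\mathrm{Gr}(n,\mathfrak d))$. Identify $\mathfrak d^*\cong\mathfrak u^*\oplus\mathfrak u$ and define $R\in\wedge^2\mathfrak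 d$ by $R(\xi_1+x_1,\xi_2+x_2)=(\xi_2,x_1)-(\xi_1,x_2)$; equivalently $R=\sum_i\eta_i\wedge e_i$ for a basis $\{e_i\}$ of $\mathfrak u$ and dual basis $\{\eta_i\}$ of $\mathfrak u^*$. Define the bivector field $\Pi=\tfrac12\kappa(R)$ on $\mathrm{Gr}(n,\mathfrak d)$. *)

theory Defs
  imports "HOL-Analysis.Analysis"
begin

text \<open>The Lie bialgebra u is modelled as u = real^'n (n = CARD('n)), its dual
u* as real^'n paired via the dot product, and the double d = u \<oplus> u* as the
product type real^'n \<times> real^'n.\<close>

type_synonym 'n dbl = "(real^'n::finite) \<times> (real^'n)"

definition pair_form :: "('n::finite) dbl \<Rightarrow> 'n dbl \<Rightarrow> real" where
  "pair_form a b = fst a \<bullet> snd b + fst b \<bullet> snd a"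

text \<open>B is the bracket of the double of a Lie bialgebra (u,u*): a Lie bracket on
u \<oplus> u* for which the form is ad-invariant and u, u* are subalgebras.
(Such a bracket is unique, and exists exactly when (u,u*) is a Lie bialgebra.)\<close>
definition manin_double :: "(('n::finite) dbl \<Rightarrow> 'n dbl \<Rightarrow> 'n dbl) \<Rightarrow> bool" where
  "manin_double B \<longleftrightarrow>
     bilinear B \<and>
     (\<forall>a b. B a b = - B b a) \<and>
     (\<forall>a b c. B a (B b c) + B b (B c a) + B c (B a b) = 0) \<and>
     (\<forall>a b c. pair_form (B a b) c = pair_form a (B b c)) \<and>
     (\<forall>x y. snd (B (x, 0) (y, 0)) = 0) \<and>
     (\<forall>\<xi> \<eta>. fst (B (0, \<xi>) (0, \<eta>)) = 0)"

definition lagrangian_subalgebra :: "(('n::finite) dbl \<Rightarrow> 'n dbl \<Rightarrow> 'n dbl) \<Rightarrow> 'n dbl set \<Rightarrow> bool" where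
  "lagrangian_subalgebra B L \<longleftrightarrow>
     subspace L \<and> dim L = CARD('n) \<and>
     (\<forall>a\<in>L. \<forall>b\<in>L. pair_form a b = 0) \<and>
     (\<forall>a\<in>L. \<forall>b\<in>L. B a b \<in> L)"

text \<open>A standard affine chart of Gr(n,d) centred at L: T is a linear automorphism of d
mapping u \<oplus> 0 onto L; the matrix X :: real^'n^'n corresponds to the n-plane
T(graph X) = T ` {(x, X x)}; X = 0 corresponds to L.\<close>
definition grass_chart :: "(('n::finite) dbl \<Rightarrow> 'n dbl) \<Rightarrow> 'n dbl set \<Rightarrow> bool" where
  "grass_chart T L \<longleftrightarrow> linear T \<and> bij T \<and> T ` {(x, 0) | x. True} = L"

definition chart_point :: "(('n::finite) dbl \<Rightarrow> 'n dbl) \<Rightarrow> real^'n^'n \<Rightarrow> 'n dbl set" where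
  "chart_point T X = T ` {(x, X *v x) | x. True}"

text \<open>The infinitesimal generator kappa(z) of the adjoint action, expressed in the chart:
if w = [z, T(x, X x)] and inv T w = (w1, w2), the velocity of the graph is
x \<mapsto> w2 - X w1.\<close>
definition kappa_chart :: "(('n::finite) dbl \<Rightarrow> 'n dbl \<Rightarrow> 'n dbl) \<Rightarrow> (('n::finite) dbl \<Rightarrow> 'n dbl)
    \<Rightarrow> 'n dbl \<Rightarrow> real^'n^'n \<Rightarrow> real^'n^'n" where
  "kappa_chart B T z X =
     (\<chi> i j. (let w = inv T (B z (T (axis j 1, X *v axis j 1)))
              in (snd w - X *v fst w) $ i))"

definition e_u :: "('n::finite) \<Rightarrow> 'n dbl" where "e_u i = (axis i 1, 0)"
definition eta_u :: "('n::finite) \<Rightarrow> 'n dbl" where "eta_u i = (0, axis i 1)"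

text \<open>Pi = 1/2 kappa(R), R = sum_i eta_i \<and> e_i, as a bivector field in the chart, evaluated
on covectors alpha, beta (identified with matrices via the inner product):
(V \<and> W)(alpha,beta) = alpha(V) beta(W) - alpha(W) beta(V).\<close>
definition Pi_chart :: "(('n::finite) dbl \<Rightarrow> 'n dbl \<Rightarrow> 'n dbl) \<Rightarrow> (('n::finite) dbl \<Rightarrow> 'n dbl)
    \<Rightarrow> real^'n^'n \<Rightarrow> real^'n^'n \<Rightarrow> real^'n^'n \<Rightarrow> real" where
  "Pi_chart B T X \<alpha> \<beta> = (1/2) * (\<Sum>i\<in>UNIV.
      (\<alpha> \<bullet> kappa_chart B T (eta_u i) X) * (\<beta> \<bullet> kappa_chart B T (e_u i) X)
    - (\<alpha> \<bullet> kappa_chart B T (e_u i) X) * (\<beta> \<bullet> kappa_chart B T (eta_u i) X))"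

text \<open>Schouten bracket of a bivector field P with itself on a Euclidean space, in linear
coordinates: [P,P]^{ijk} = 2 * cyclic sum of P^{il} d_l P^{jk}, evaluated on constant
covectors alpha, beta, gamma.\<close>
definition sharp :: "('a::euclidean_space \<Rightarrow> 'a \<Rightarrow> 'a \<Rightarrow> real) \<Rightarrow> 'a \<Rightarrow> 'a \<Rightarrow> 'a" where
  "sharp P p \<alpha> = (\<Sum>b\<in>Basis. P p \<alpha> b *\<^sub>R b)"

definition schouten_self :: "('a::euclidean_space \<Rightarrow> 'a \<Rightarrow> 'a \<Rightarrow> real) \<Rightarrow> 'a
    \<Rightarrow> 'a \<Rightarrow> 'a \<Rightarrow> 'a \<Rightarrow> real" where
  "schouten_self P p \<alpha> \<beta> \<gamma> = 2 *
     (frechet_derivative (\<lambda>q. P q \<beta> \<gamma>) (at p) (sharp P p \<alpha>)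
    + frechet_derivative (\<lambda>q. P q \<gamma> \<alpha>) (at p) (sharp P p \<beta>)
    + frechet_derivative (\<lambda>q. P q \<alpha> \<beta>) (at p) (sharp P p \<gamma>))"

end

theory Submission
  imports Defs
begin

definition Mz :: "(('n::finite) dbl \<Rightarrow> 'n dbl \<Rightarrow> 'n dbl) \<Rightarrow> ('n dbl \<Rightarrow> 'n dbl) \<Rightarrow> 'n dbl \<Rightarrow> 'n dbl \<Rightarrow> 'n dbl"
  where "Mz B T z p = inv T (B z (T p))"

definition Am where "Am B T z = matrix (\<lambda>x. fst (Mz B T z (x,0)))"
definition Pm where "Pm B T z = matrix (\<lambda>y. fst (Mz B T z (0,y)))"
definition Cm where "Cm B T z = matrix (\<lambda>x. snd (Mz B T z (x,0)))"
definition Dm where "Dm B T z = matrix (\<lambda>y. snd (Mz B T z (0,y)))"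

locale setting =
  fixes B :: "('n::finite) dbl \<Rightarrow> 'n dbl \<Rightarrow> 'n dbl"
    and L :: "'n dbl set"
    and T :: "'n dbl \<Rightarrow> 'n dbl"
  assumes md: "manin_double B"
    and lag: "lagrangian_subalgebra B L"
    and gc: "grass_chart T L"
begin

lemma linT: "linear T" using gc by (simp add: grass_chart_def)
lemma bijT: "bij T" using gc by (simp add: grass_chart_def)
lemma linTi: "linear (inv T)"
  using inj_linear_imp_inv_linear[OF linT] bijT bij_is_inj by blast
lemma TiT[simp]: "inv T (T p) = p" using bijT bij_is_inj inv_f_f by metis
lemma TTi[simp]: "T (inv T p) = p" using bijT bij_is_surj surj_f_inv_f by metis
lemma bilB: "bilinear B" using md by (simp add: manin_double_def)

lemma linM: "linear (Mz B T z)"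
  unfolding Mz_def
  using linear_compose[OF linT linear_compose[OF bilB[unfolded bilinear_def, THEN conjunct1, rule_format] linTi]]
  by (simp add: o_def)

lemma linMz: "linear (\<lambda>z. Mz B T z p)"
  unfolding Mz_def
  using linear_compose[OF bilB[unfolded bilinear_def, THEN conjunct2, rule_format] linTi]
  by (simp add: o_def)


lemma lin_fst0: assumes "linear f" shows "linear (\<lambda> x. fst (f (x, 0)))"
proof (rule linearI)
  fix a b show "fst (f ((a + b), 0)) = fst (f (a, 0)) + fst (f (b, 0))"
    using linear_add[OF assms, of "(a, 0)" "(b, 0)"] by simp
next
  fix r b show "fst (f ((r *\<^sub>R b), 0)) = r *\<^sub>R fst (f (b, 0))"
    using linear_scale[OF assms, of r "(b, 0)"] by simp
qed

lemma lin_snd0: assumes "linear f" shows "linear (\<lambda> x. snd (f (x, 0)))"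
proof (rule linearI)
  fix a b show "snd (f ((a + b), 0)) = snd (f (a, 0)) + snd (f (b, 0))"
    using linear_add[OF assms, of "(a, 0)" "(b, 0)"] by simp
next
  fix r b show "snd (f ((r *\<^sub>R b), 0)) = r *\<^sub>R snd (f (b, 0))"
    using linear_scale[OF assms, of r "(b, 0)"] by simp
qed

lemma lin_fst0': assumes "linear f" shows "linear (\<lambda> x. fst (f (0, x)))"
proof (rule linearI)
  fix a b show "fst (f (0, (a + b))) = fst (f (0, a)) + fst (f (0, b))"
    using linear_add[OF assms, of "(0, a)" "(0, b)"] by simp
next
  fix r b show "fst (f (0, (r *\<^sub>R b))) = r *\<^sub>R fst (f (0, b))"
    using linear_scale[OF assms, of r "(0, b)"] by simp
qed

lemma lin_snd0': assumes "linear f" shows "linear (\<lambda> x. snd (f (0, x)))"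
proof (rule linearI)
  fix a b show "snd (f (0, (a + b))) = snd (f (0, a)) + snd (f (0, b))"
    using linear_add[OF assms, of "(0, a)" "(0, b)"] by simp
next
  fix r b show "snd (f (0, (r *\<^sub>R b))) = r *\<^sub>R snd (f (0, b))"
    using linear_scale[OF assms, of r "(0, b)"] by simp
qed

lemma Mdec: "Mz B T z (x, y) = (Am B T z *v x + Pm B T z *v y, Cm B T z *v x + Dm B T z *v y)"
proof -
  have "Mz B T z (x, y) = Mz B T z (x, 0) + Mz B T z (0, y)"
    using linear_add[OF linM, of z "(x,0)" "(0,y)"] by simp
  then show ?thesis
    unfolding Am_def Pm_def Cm_def Dm_def
    by (simp add: matrix_works[unfolded linear_matrix_vector_mul_eq] lin_fst0 lin_snd0 lin_fst0' lin_snd0' linM prod_eq_iff)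
qed

lemma mv_axis: "((M::real^'m^'k) *v axis j 1) $ i = M $ i $ j"
  by (simp add: matrix_vector_mult_def axis_def if_distrib cong: if_cong)

lemma kappa_eq: "kappa_chart B T z X = Cm B T z + Dm B T z ** X - X ** Am B T z - X ** (Pm B T z ** X)"
proof -
  have "kappa_chart B T z X $ i $ j = (Cm B T z + Dm B T z ** X - X ** Am B T z - X ** (Pm B T z ** X)) $ i $ j" for i j
  proof -
    have "kappa_chart B T z X $ i $ j = (snd (Mz B T z (axis j 1, X *v axis j 1)) - X *v fst (Mz B T z (axis j 1, X *v axis j 1))) $ i"
      by (simp add: kappa_chart_def Mz_def Let_def)
    also have "\<dots> = ((Cm B T z + Dm B T z ** X - X ** Am B T z - X ** (Pm B T z ** X)) *v axis j 1) $ i"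
      by (simp add: Mdec algebra_simps matrix_vector_mul_assoc)
    also have "\<dots> = (Cm B T z + Dm B T z ** X - X ** Am B T z - X ** (Pm B T z ** X)) $ i $ j"
      by (rule mv_axis)
    finally show ?thesis .
  qed
  then show ?thesis by (simp add: vec_eq_iff)
qed


lemma linAm: "linear (Am B T)"
  unfolding Am_def
  by (rule linearI) (simp_all add: matrix_def vec_eq_iff linear_add[OF linMz] linear_scale[OF linMz])
lemma linPm: "linear (Pm B T)"
  unfolding Pm_def
  by (rule linearI) (simp_all add: matrix_def vec_eq_iff linear_add[OF linMz] linear_scale[OF linMz])
lemma linCm: "linear (Cm B T)"
  unfolding Cm_def
  by (rule linearI) (simp_all add: matrix_def vec_eq_iff linear_add[OF linMz] linear_scale[OF linMz])
lemma linDm: "linear (Dm B T)"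
  unfolding Dm_def
  by (rule linearI) (simp_all add: matrix_def vec_eq_iff linear_add[OF linMz] linear_scale[OF linMz])

end

lemma bilinear_mm: "bilinear ((**) :: real^'n^'n \<Rightarrow> real^'n^'n \<Rightarrow> real^'n^'n)"
  unfolding bilinear_def
proof (intro conjI allI)
  fix x :: "real^'n^'n"
  show "linear ((**) x)"
    by (rule linearI) (simp_all add: matrix_matrix_mult_def vec_eq_iff sum.distrib algebra_simps sum_distrib_left)
next
  fix y :: "real^'n^'n"
  show "linear (\<lambda>x. x ** y)"
    by (rule linearI) (simp_all add: matrix_matrix_mult_def vec_eq_iff sum.distrib algebra_simps sum_distrib_left)
qed

lemma bb_mm: "bounded_bilinear ((**) :: real^'n^'n \<Rightarrow> real^'n^'n \<Rightarrow> real^'n^'n)"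
  using bilinear_mm bilinear_conv_bounded_bilinear by blast


definition dl where "dl B T z H = Dm B T z ** H - H ** Am B T z"
definition rho where "rho B T v = (\<Sum>i\<in>UNIV. (v \<bullet> Cm B T (eta_u i)) *\<^sub>R e_u i - (v \<bullet> Cm B T (e_u i)) *\<^sub>R eta_u i)"

context setting begin

lemma kappa0: "kappa_chart B T z 0 = Cm B T z"
  by (simp add: kappa_eq)

end

lemma mm_left: "((\<lambda>X::real^'n^'n. (A::real^'n^'n) ** X) has_derivative (\<lambda>H. A ** H)) F"
  by (rule bounded_linear.has_derivative[OF bounded_bilinear.bounded_linear_right[OF bb_mm] has_derivative_ident])
lemma mm_right: "((\<lambda>X::real^'n^'n. X ** (A::real^'n^'n)) has_derivative (\<lambda>H. H ** A)) F"
  by (rule bounded_linear.has_derivative[OF bounded_bilinear.bounded_linear_left[OF bb_mm] has_derivative_ident])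
lemma mm_quad: "((\<lambda>X. X ** ((P::real^'n^'n) ** X)) has_derivative (\<lambda>H. 0)) (at 0)"
proof -
  have "((\<lambda>X. X ** (P ** X)) has_derivative (\<lambda>h. 0 ** (P ** h) + h ** (P ** 0))) (at 0 within UNIV)"
    by (rule bounded_bilinear.FDERIV[OF bb_mm has_derivative_ident mm_left])
  then show ?thesis by simp
qed

context setting begin
lemma kappa_deriv: "(kappa_chart B T z has_derivative dl B T z) (at 0)"
proof -
  have e: "kappa_chart B T z = (\<lambda>X. Cm B T z + Dm B T z ** X - X ** Am B T z - X ** (Pm B T z ** X))"
    by (simp add: kappa_eq fun_eq_iff)
  show ?thesis
    unfolding e
    apply (rule has_derivative_eq_rhs)
     apply (rule has_derivative_diff has_derivative_add has_derivative_const mm_left mm_right mm_quad)+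
    apply (simp add: fun_eq_iff dl_def)
    done
qed

lemma Pi_deriv: "((\<lambda>X. Pi_chart B T X a b) has_derivative (\<lambda>H. (1/2) * (\<Sum>i\<in>UNIV.
     (a \<bullet> dl B T (eta_u i) H) * (b \<bullet> Cm B T (e_u i)) + (a \<bullet> Cm B T (eta_u i)) * (b \<bullet> dl B T (e_u i) H)
   - ((a \<bullet> dl B T (e_u i) H) * (b \<bullet> Cm B T (eta_u i)) + (a \<bullet> Cm B T (e_u i)) * (b \<bullet> dl B T (eta_u i) H))))) (at 0)"
  unfolding Pi_chart_def
  apply (rule has_derivative_eq_rhs)
   apply (rule has_derivative_mult has_derivative_const has_derivative_sum has_derivative_diff has_derivative_inner_right kappa_deriv)+
  apply (simp add: fun_eq_iff kappa0 algebra_simps)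
  done
end

definition psi where "psi B T v = ((\<chi> a. v \<bullet> Cm B T (eta_u a)), (\<chi> a. v \<bullet> Cm B T (e_u a)))"

lemma axis_sum: "(\<Sum>i\<in>UNIV. x i *\<^sub>R axis i (1::real)) = (\<chi> i. x i)"
  by (simp add: vec_eq_iff sum_component axis_def mult_delta_right)

lemma sum_e_eta: "(\<Sum>i\<in>UNIV. x i *\<^sub>R e_u i - y i *\<^sub>R eta_u i) = ((\<chi> i. x i), - (\<chi> i. y i))"
  by (simp add: e_u_def eta_u_def prod_eq_iff fst_sum snd_sum sum_subtractf sum_negf axis_sum)

lemma rho_psi: "rho B T v = (fst (psi B T v), - snd (psi B T v))"
  unfolding rho_def psi_def sum_e_eta by simp

lemma decomp: "(z::'n::finite dbl) = (\<Sum>i\<in>UNIV. (fst z $ i) *\<^sub>R e_u i + (snd z $ i) *\<^sub>R eta_u i)"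
  by (simp add: e_u_def eta_u_def prod_eq_iff fst_sum snd_sum sum.distrib axis_sum)
context setting begin

lemma rho_lin: assumes "linear f"
  shows "w \<bullet> f (rho B T v) = (\<Sum>i\<in>UNIV. (v \<bullet> Cm B T (eta_u i)) * (w \<bullet> f (e_u i)) - (v \<bullet> Cm B T (e_u i)) * (w \<bullet> f (eta_u i)))"
  unfolding rho_def
  by (simp add: linear_sum[OF assms] linear_diff[OF assms] linear_scale[OF assms] inner_sum_right inner_diff_right)

lemma lin_dl: "linear (\<lambda>z. dl B T z H)"
  unfolding dl_def
  by (rule linearI) (simp_all add: linear_add[OF linDm] linear_scale[OF linDm] linear_add[OF linAm] linear_scale[OF linAm]
      bilinear_ladd[OF bilinear_mm] bilinear_radd[OF bilinear_mm] bilinear_lmul[OF bilinear_mm] bilinear_rmul[OF bilinear_mm] algebra_simps)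

lemma dl_scale: "dl B T z (r *\<^sub>R H) = r *\<^sub>R dl B T z H"
  unfolding dl_def
  by (simp add: bilinear_lmul[OF bilinear_mm] bilinear_rmul[OF bilinear_mm] algebra_simps)
lemma FD: "frechet_derivative (\<lambda>q. Pi_chart B T q b c) (at 0) H = (1/2) * (c \<bullet> dl B T (rho B T b) H - b \<bullet> dl B T (rho B T c) H)"
proof -
  have fe: "frechet_derivative (\<lambda>q. Pi_chart B T q b c) (at 0) = (\<lambda>H. (1/2) * (\<Sum>i\<in>UNIV.
     (b \<bullet> dl B T (eta_u i) H) * (c \<bullet> Cm B T (e_u i)) + (b \<bullet> Cm B T (eta_u i)) * (c \<bullet> dl B T (e_u i) H)
   - ((b \<bullet> dl B T (e_u i) H) * (c \<bullet> Cm B T (eta_u i)) + (b \<bullet> Cm B T (e_u i)) * (c \<bullet> dl B T (eta_u i) H))))"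
    using frechet_derivative_at[OF Pi_deriv[of b c]] by (rule sym)
  have "frechet_derivative (\<lambda>q. Pi_chart B T q b c) (at 0) H = (1/2) * (\<Sum>i\<in>UNIV.
     (b \<bullet> dl B T (eta_u i) H) * (c \<bullet> Cm B T (e_u i)) + (b \<bullet> Cm B T (eta_u i)) * (c \<bullet> dl B T (e_u i) H)
   - ((b \<bullet> dl B T (e_u i) H) * (c \<bullet> Cm B T (eta_u i)) + (b \<bullet> Cm B T (e_u i)) * (c \<bullet> dl B T (eta_u i) H)))"
    unfolding fe by (rule refl)
  also have "\<dots> = (1/2) * (c \<bullet> dl B T (rho B T b) H - b \<bullet> dl B T (rho B T c) H)"
    unfolding rho_lin[OF lin_dl] sum_subtractf[symmetric]
    by (rule arg_cong[where f="\<lambda>x. (1/2) * x"], rule sum.cong) (simp_all add: algebra_simps)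
  finally show ?thesis .
qed

lemma sharp0: "sharp (Pi_chart B T) 0 a = (1/2) *\<^sub>R Cm B T (rho B T a)"
proof -
  have pc: "Pi_chart B T 0 a b = ((1/2) *\<^sub>R Cm B T (rho B T a)) \<bullet> b" for b
  proof -
    have "Pi_chart B T 0 a b = (1/2) * (b \<bullet> Cm B T (rho B T a))"
      unfolding Pi_chart_def kappa0 rho_lin[OF linCm] by simp
    then show ?thesis by (simp add: inner_commute)
  qed
  then show ?thesis
    unfolding sharp_def by (simp only: pc euclidean_representation)
qed

lemma Cm_pf: "v \<bullet> Cm B T z = pair_form (psi B T v) z"
proof -
  have "v \<bullet> Cm B T z = v \<bullet> Cm B T (\<Sum>i\<in>UNIV. (fst z $ i) *\<^sub>R e_u i + (snd z $ i) *\<^sub>R eta_u i)"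
    using decomp[of z] by simp
  also have "\<dots> = (\<Sum>i\<in>UNIV. (fst z $ i) * (v \<bullet> Cm B T (e_u i)) + (snd z $ i) * (v \<bullet> Cm B T (eta_u i)))"
    by (simp add: linear_sum[OF linCm] linear_add[OF linCm] linear_scale[OF linCm] inner_sum_right inner_add_right)
  also have "\<dots> = (\<Sum>i\<in>UNIV. (v \<bullet> Cm B T (eta_u i)) * (snd z $ i)) + (\<Sum>i\<in>UNIV. (fst z $ i) * (v \<bullet> Cm B T (e_u i)))"
    by (simp add: sum.distrib mult.commute add.commute)
  also have "\<dots> = pair_form (psi B T v) z"
    by (simp add: pair_form_def psi_def inner_vec_def)
  finally show ?thesis .
qed
end

context setting begin

lemma antisym: "B a b = - B b a" using md unfolding manin_double_def by blast
lemma jacobi: "B a (B b c) + B b (B c a) + B c (B a b) = 0" using md unfolding manin_double_def by blast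
lemma invar: "pair_form (B a b) c = pair_form a (B b c)" using md unfolding manin_double_def by blast
lemma usub: "snd (B (x, 0) (y, 0)) = 0" using md unfolding manin_double_def by blast
lemma dsub: "fst (B (0, x) (0, y)) = 0" using md unfolding manin_double_def by blast

lemma jac: "B (B z w) c = B z (B w c) - B w (B z c)"
proof -
  have j: "B z (B w c) + B w (B c z) + B c (B z w) = 0" by (rule jacobi)
  have "B c z = - B z c" by (rule antisym)
  moreover have "B c (B z w) = - B (B z w) c" by (rule antisym)
  ultimately show ?thesis using j bilinear_rneg[OF bilB] by (simp add: algebra_simps)
qed

lemma M_br: "Mz B T (B z w) p = Mz B T z (Mz B T w p) - Mz B T w (Mz B T z p)"
  unfolding Mz_def by (simp add: jac linear_diff[OF linTi])

lemma bracket: "dl B T z (Cm B T w) - dl B T w (Cm B T z) = Cm B T (B z w)"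
proof -
  have "(dl B T z (Cm B T w) - dl B T w (Cm B T z)) *v x = Cm B T (B z w) *v x" for x
  proof -
    have "Cm B T (B z w) *v x = snd (Mz B T (B z w) (x, 0))" by (simp add: Mdec)
    also have "\<dots> = snd (Mz B T z (Mz B T w (x,0))) - snd (Mz B T w (Mz B T z (x,0)))"
      by (simp add: M_br)
    also have "\<dots> = (dl B T z (Cm B T w) - dl B T w (Cm B T z)) *v x"
      by (simp add: Mdec dl_def algebra_simps matrix_vector_mul_assoc)
    finally show ?thesis by simp
  qed
  then show ?thesis by (simp add: matrix_eq)
qed

end

lemma perp_sub:
  fixes L :: "('n::finite) dbl set"
  assumes sL: "subspace L" and dL: "dim L = CARD('n)"
    and iso: "\<And>a b. a \<in> L \<Longrightarrow> b \<in> L \<Longrightarrow> pair_form a b = 0"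
    and p: "\<And>l. l \<in> L \<Longrightarrow> pair_form p l = 0"
  shows "p \<in> L"
proof -
  define S where "S = (\<lambda>q::'n dbl. (snd q, fst q))"
  have linS: "linear S" unfolding S_def by (rule linearI) auto
  have injS: "inj S" unfolding S_def inj_def by auto
  have pfS: "pair_form q l = S l \<bullet> q" for q l
    by (simp add: S_def pair_form_def inner_prod_def inner_commute)
  define W where "W = S ` L"
  have sW: "subspace W" unfolding W_def by (rule real_vector.linear_subspace_image[OF linS sL])
  have dW: "dim W = CARD('n)" unfolding W_def using eucl.dim_image_eq[OF linS] injS dL
    by (metis inj_on_subset subset_UNIV)
  define Oc where "Oc = {y \<in> UNIV. \<forall>x\<in>W. orthogonal x y}"
  have dO: "dim Oc + dim W = dim (UNIV :: 'n dbl set)"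
    unfolding Oc_def by (rule dim_subspace_orthogonal_to_vectors[OF sW subspace_UNIV subset_UNIV])
  have "dim (UNIV :: 'n dbl set) = 2 * CARD('n)" by simp
  with dO dW have dO': "dim Oc = CARD('n)" by simp
  have sO: "subspace Oc" unfolding Oc_def using subspace_orthogonal_to_vectors[of W] by simp
  have LO: "L \<subseteq> Oc"
    unfolding Oc_def W_def orthogonal_def using iso pfS by auto
  have "L = Oc" using subspace_dim_equal[OF sL sO LO] dO' dL by simp
  moreover have "p \<in> Oc" unfolding Oc_def W_def orthogonal_def using p pfS by auto
  ultimately show ?thesis by simp
qed

context setting begin

lemma sL: "subspace L" using lag unfolding lagrangian_subalgebra_def by blast
lemma dL: "dim L = CARD('n)" using lag unfolding lagrangian_subalgebra_def by blast
lemma isoL: "a \<in> L \<Longrightarrow> b \<in> L \<Longrightarrow> pair_form a b = 0" using lag unfolding lagrangian_subalgebra_def by blast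
lemma closedL: "a \<in> L \<Longrightarrow> b \<in> L \<Longrightarrow> B a b \<in> L" using lag unfolding lagrangian_subalgebra_def by blast
lemma imgL: "T ` {(x, 0) | x. True} = L" using gc unfolding grass_chart_def by blast

lemma Cm_L: assumes "l \<in> L" shows "Cm B T l = 0"
proof -
  have "Cm B T l *v x = 0 *v x" for x
  proof -
    have "T (x, 0) \<in> L" using imgL by blast
    then have "B l (T (x, 0)) \<in> L" using closedL assms by blast
    then obtain y where y: "B l (T (x, 0)) = T (y, 0)" using imgL by blast
    have "Cm B T l *v x = snd (Mz B T l (x, 0))" by (simp add: Mdec)
    also have "\<dots> = 0" by (simp add: Mz_def y)
    finally show ?thesis by simp
  qed
  then show ?thesis by (simp only: matrix_eq) blast
qed

lemma psi_L: "psi B T v \<in> L"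
  by (rule perp_sub[OF sL dL isoL]) (simp_all add: Cm_pf[symmetric] Cm_L)

end

definition Jf :: "('n::finite) dbl \<Rightarrow> 'n dbl" where "Jf q = (fst q, - snd q)"

lemma pf_sym: "pair_form a b = pair_form b a" by (simp add: pair_form_def inner_commute add.commute)
lemma pf_add1: "pair_form (a + b) c = pair_form a c + pair_form b c" by (simp add: pair_form_def inner_add algebra_simps)
lemma pf_add2: "pair_form c (a + b) = pair_form c a + pair_form c b" by (simp add: pair_form_def inner_add algebra_simps)
lemma pf_diff1: "pair_form (a - b) c = pair_form a c - pair_form b c" by (simp add: pair_form_def inner_diff algebra_simps)
lemma pf_diff2: "pair_form c (a - b) = pair_form c a - pair_form c b" by (simp add: pair_form_def inner_diff algebra_simps)
lemma pf_neg2: "pair_form c (- a) = - pair_form c a" by (simp add: pair_form_def)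

context setting begin

definition phi where "phi x y z = pair_form x (B y z)"

lemma phi_cyc: "phi x y z = phi y z x"
  unfolding phi_def by (metis invar pf_sym)
lemma phi_anti: "phi x y z = - phi x z y"
  unfolding phi_def by (metis antisym pf_neg2)

lemma phi_lin:
  "phi (a + b) y z = phi a y z + phi b y z"
  "phi (a - b) y z = phi a y z - phi b y z"
  "phi x (a + b) z = phi x a z + phi x b z"
  "phi x (a - b) z = phi x a z - phi x b z"
  "phi x y (a + b) = phi x y a + phi x y b"
  "phi x y (a - b) = phi x y a - phi x y b"
  unfolding phi_def
  by (simp_all add: pf_add1 pf_add2 pf_diff1 pf_diff2 bilinear_ladd[OF bilB] bilinear_radd[OF bilB]
      bilinear_lsub[OF bilB] bilinear_rsub[OF bilB])

lemma phi_uuu: "phi (x, 0) (y, 0) (z, 0) = 0"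
  unfolding phi_def pair_form_def using usub[of y z] by simp
lemma phi_ddd: "phi (0, x) (0, y) (0, z) = 0"
  unfolding phi_def pair_form_def using dsub[of y z] by simp

lemma cyclic0:
  assumes a: "a \<in> L" and b: "b \<in> L" and c: "c \<in> L"
  shows "pair_form c (B (Jf b) (Jf a)) + pair_form b (B (Jf a) (Jf c)) + pair_form a (B (Jf c) (Jf b)) = 0"
proof -
  define a1 a2 b1 b2 c1 c2 where "a1 = (fst a, 0::real^'n)" "a2 = (0::real^'n, snd a)" "b1 = (fst b, 0::real^'n)" "b2 = (0::real^'n, snd b)"
     "c1 = (fst c, 0::real^'n)" "c2 = (0::real^'n, snd c)"
  have ea: "a = a1 + a2" "Jf a = a1 - a2" by (simp_all add: a1_a2_b1_b2_c1_c2_def Jf_def prod_eq_iff)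
  have eb: "b = b1 + b2" "Jf b = b1 - b2" by (simp_all add: a1_a2_b1_b2_c1_c2_def Jf_def prod_eq_iff)
  have ec: "c = c1 + c2" "Jf c = c1 - c2" by (simp_all add: a1_a2_b1_b2_c1_c2_def Jf_def prod_eq_iff)
  have z1: "phi a1 b1 c1 = 0" "phi a2 b2 c2 = 0"
    unfolding a1_a2_b1_b2_c1_c2_def by (simp_all only: phi_uuu phi_ddd)
  have "phi a b c = 0" unfolding phi_def using isoL[OF a closedL[OF b c]] .
  then have z2: "phi (a1 + a2) (b1 + b2) (c1 + c2) = 0" using ea eb ec by simp
  have g: "pair_form c (B (Jf b) (Jf a)) + pair_form b (B (Jf a) (Jf c)) + pair_form a (B (Jf c) (Jf b))
      = - (phi (Jf a) (Jf b) c + phi (Jf a) b (Jf c) + phi a (Jf b) (Jf c))"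
  proof -
    have 1: "pair_form c (B (Jf b) (Jf a)) = - phi (Jf a) (Jf b) c"
      unfolding phi_def[symmetric] by (metis phi_anti phi_cyc)
    have 2: "pair_form b (B (Jf a) (Jf c)) = - phi (Jf a) b (Jf c)"
      unfolding phi_def[symmetric] by (metis phi_anti phi_cyc)
    have 3: "pair_form a (B (Jf c) (Jf b)) = - phi a (Jf b) (Jf c)"
      unfolding phi_def[symmetric] by (metis phi_anti)
    show ?thesis using 1 2 3 by simp
  qed
  have "phi (Jf a) (Jf b) c + phi (Jf a) b (Jf c) + phi a (Jf b) (Jf c) = 0"
    using z1 z2 unfolding ea(2) eb(2) ec(2)
    by (subst ea(1), subst eb(1), subst ec(1), simp only: phi_lin)
  then show ?thesis using g by simp
qed

end

context setting begin

lemma rhoJ: "rho B T v = Jf (psi B T v)" by (simp add: rho_psi Jf_def)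

lemma brv: "w \<bullet> dl B T z (Cm B T y) - w \<bullet> dl B T y (Cm B T z) = pair_form (psi B T w) (B z y)"
  using bracket[of z y] by (simp add: inner_diff_right[symmetric] Cm_pf)

lemma main: "schouten_self (Pi_chart B T) 0 a b c = 0"
proof -
  let ?r = "rho B T" and ?C = "Cm B T" and ?d = "dl B T"
  have "schouten_self (Pi_chart B T) 0 a b c = (1/2) *
      ((c \<bullet> ?d (?r b) (?C (?r a)) - c \<bullet> ?d (?r a) (?C (?r b)))
     + (b \<bullet> ?d (?r a) (?C (?r c)) - b \<bullet> ?d (?r c) (?C (?r a)))
     + (a \<bullet> ?d (?r c) (?C (?r b)) - a \<bullet> ?d (?r b) (?C (?r c))))"
    unfolding schouten_self_def FD sharp0 dl_scale by (simp add: algebra_simps)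
  also have "\<dots> = (1/2) * (pair_form (psi B T c) (B (?r b) (?r a)) + pair_form (psi B T b) (B (?r a) (?r c))
      + pair_form (psi B T a) (B (?r c) (?r b)))"
    by (simp only: brv)
  also have "\<dots> = 0"
    unfolding rhoJ using cyclic0[OF psi_L[of a] psi_L[of b] psi_L[of c]] by simp
  finally show ?thesis .
qed

end

theorem theorem2p14:
  fixes B :: "('n::finite) dbl \<Rightarrow> 'n dbl \<Rightarrow> 'n dbl"
    and L :: "'n dbl set"
    and T :: "'n dbl \<Rightarrow> 'n dbl"
  assumes "manin_double B"
    and "lagrangian_subalgebra B L"
    and "grass_chart T L"
  shows "\<forall>\<alpha> \<beta> \<gamma>. schouten_self (Pi_chart B T) 0 \<alpha> \<beta> \<gamma> = 0"
proof -
  interpret setting B L T using assms by unfold_locales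
  show ?thesis using main by blast
qed

end
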